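(* Let $\mathbb{F}$ be a finite field of odd characteristic and $\lambda$ the quadratic character of $\mathbb{F}^\times$ extended by $\lambda(0)=0$. For $z\in\mathbb{F}$ and $\gamma\in\mathbb{F}^\times$ let $X_{\mathbb{F},\gamma}(z)=\{(u,v)\in\mathbb{F}^2: v^2-(u^2-uz-4\gamma)v+\gamma z^2=0\}$. Then $$|X_{\mathbb{F},\gamma}(z)|=|\mathbb{F}|(1+\delta_{z,0})-1+\sum_{x\in\mathbb{F}}\lambda\big(x(x+16\gamma)(x+z^2)\big),$$ where $\delta_{z,0}=1$ if $z=0$ and $0$ otherwise. *)

theory Defs
  imports Main
begin

definition qchar :: "'a::field \<Rightarrow> int" where
  "qchar x = (if x = 0 then 0 else if (\<exists>y. y ^ 2 = x) then 1 else -1)"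

definition Xset :: "'a::field \<Rightarrow> 'a \<Rightarrow> ('a \<times> 'a) set" where
  "Xset \<gamma> z = {(u, v). v ^ 2 - (u ^ 2 - u * z - 4 * \<gamma>) * v + \<gamma> * z ^ 2 = 0}"

end

theory Submission
  imports Defs
begin

lemma two_ne0:
  assumes "odd CHAR('a::{field, finite})"
  shows "(2::'a) \<noteq> 0"
proof
  assume h: "(2::'a) = 0"
  have "of_nat 2 = (0::'a)" using h by simp
  then have "CHAR('a) dvd 2" by (simp only: of_nat_eq_0_iff_char_dvd)
  then have "CHAR('a) \<le> 2" by (rule dvd_imp_le) simp
  then have "CHAR('a) = 0 \<or> CHAR('a) = 1 \<or> CHAR('a) = 2" by arith
  with assms \<open>CHAR('a) dvd 2\<close> have "CHAR('a) = 1" by auto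
  then show False using of_nat_CHAR[where 'a='a] by simp
qed

lemma four_ne:
  assumes "(2::'a::field) \<noteq> 0"
  shows "(4::'a) \<noteq> 0"
proof -
  have "(2::'a) * 2 \<noteq> 0" using assms by (simp only: mult_eq_0_iff) simp
  then show ?thesis by simp
qed

lemma card_sqrt:
  fixes d :: "'a::{field, finite}"
  assumes two: "(2::'a) \<noteq> 0"
  shows "int (card {t. t ^ 2 = d}) = 1 + qchar d"
proof (cases "d = 0")
  case True
  then have "{t. t ^ 2 = d} = {0}" by auto
  then show ?thesis using True by (simp add: qchar_def)
next
  case False
  show ?thesis
  proof (cases "\<exists>y. y ^ 2 = d")
    case True
    then obtain y where y: "y ^ 2 = d" by blast
    then have y0: "y \<noteq> 0" using False by auto
    have "y \<noteq> - y"
    proof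
      assume e: "y = - y"
      have "2 * y = y + y" by (rule mult_2)
      also have "\<dots> = y + - y" using e by (rule arg_cong[where f="(+) y"])
      finally have "2 * y = 0" by simp
      then show False using two y0 by simp
    qed
    have "{t. t ^ 2 = d} = {y, - y}"
    proof -
      have "t ^ 2 = d \<longleftrightarrow> t = y \<or> t = - y" for t
        using y power2_eq_iff[of t y] by simp
      then show ?thesis by auto
    qed
    then show ?thesis using \<open>y \<noteq> - y\<close> False True by (simp add: qchar_def)
  next
    case nsq: False
    then have "{t. t ^ 2 = d} = {}" by auto
    then show ?thesis using nsq False by (simp add: qchar_def)
  qed
qed

lemma card_quad:
  fixes z c :: "'a::{field, finite}"
  assumes two: "(2::'a) \<noteq> 0"
  shows "int (card {u. u ^ 2 - z * u - c = 0}) = 1 + qchar (z ^ 2 + 4 * c)"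
proof -
  let ?f = "\<lambda>u. 2 * u - z"
  have inj: "inj_on ?f {u. u ^ 2 - z * u - c = 0}"
    by (rule inj_onI) (use two in simp)
  have img: "?f ` {u. u ^ 2 - z * u - c = 0} = {t. t ^ 2 = z ^ 2 + 4 * c}"
  proof
    show "?f ` {u. u ^ 2 - z * u - c = 0} \<subseteq> {t. t ^ 2 = z ^ 2 + 4 * c}"
    proof
      fix t assume "t \<in> ?f ` {u. u ^ 2 - z * u - c = 0}"
      then obtain u where u: "u ^ 2 - z * u - c = 0" and t: "t = 2 * u - z" by auto
      have "t ^ 2 = 4 * (u ^ 2 - z * u - c) + z ^ 2 + 4 * c"
        unfolding t by (simp add: power2_eq_square algebra_simps)
      then show "t \<in> {t. t ^ 2 = z ^ 2 + 4 * c}" using u by simp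
    qed
  next
    show "{t. t ^ 2 = z ^ 2 + 4 * c} \<subseteq> ?f ` {u. u ^ 2 - z * u - c = 0}"
    proof
      fix t assume "t \<in> {t. t ^ 2 = z ^ 2 + 4 * c}"
      then have t: "t ^ 2 = z ^ 2 + 4 * c" by simp
      define u where "u = (t + z) / 2"
      have tu: "t = 2 * u - z" unfolding u_def using two by (simp add: field_simps)
      have "4 * (u ^ 2 - z * u - c) = t ^ 2 - z ^ 2 - 4 * c"
        unfolding tu by (simp add: power2_eq_square algebra_simps)
      then have "4 * (u ^ 2 - z * u - c) = 0" using t by simp
      moreover have "(4::'a) \<noteq> 0" using two by (rule four_ne)
      ultimately have "u ^ 2 - z * u - c = 0" by (auto simp only: mult_eq_0_iff)
      then show "t \<in> ?f ` {u. u ^ 2 - z * u - c = 0}" using tu by auto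
    qed
  qed
  have "card {u. u ^ 2 - z * u - c = 0} = card {t. t ^ 2 = z ^ 2 + 4 * c}"
    using card_image[OF inj] img by simp
  then show ?thesis using card_sqrt[OF two] by simp
qed

lemma qchar_sq:
  fixes a s :: "'a::field"
  assumes "s \<noteq> 0"
  shows "qchar (s ^ 2 * a) = qchar a"
proof -
  have "(\<exists>y. y ^ 2 = s ^ 2 * a) \<longleftrightarrow> (\<exists>y. y ^ 2 = a)"
  proof
    assume "\<exists>y. y ^ 2 = s ^ 2 * a"
    then obtain y where "y ^ 2 = s ^ 2 * a" by blast
    then have "(y / s) ^ 2 = a" using assms by (simp add: power_divide)
    then show "\<exists>y. y ^ 2 = a" by blast
  next
    assume "\<exists>y. y ^ 2 = a"
    then obtain y where "y ^ 2 = a" by blast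
    then have "(s * y) ^ 2 = s ^ 2 * a" by (simp add: power_mult_distrib)
    then show "\<exists>y. y ^ 2 = s ^ 2 * a" by blast
  qed
  then show ?thesis using assms by (simp add: qchar_def)
qed

lemma arith_aux:
  fixes X S0 B N T :: int
  assumes "X = S0" "S0 = B + (N - 1 + T)" "B = N * (if b then 1 else 0)"
  shows "X = N * (1 + (if b then 1 else 0)) - 1 + T"
  using assms by (cases b) auto

theorem lemma3p4:
  fixes \<gamma> z :: "'a::{field, finite}"
  assumes "odd CHAR('a)"
    and "\<gamma> \<noteq> 0"
  shows "int (card (Xset \<gamma> z)) =
           int (card (UNIV :: 'a set)) * (1 + (if z = 0 then 1 else 0)) - 1
           + (\<Sum>x\<in>UNIV. qchar (x * (x + 16 * \<gamma>) * (x + z ^ 2)))"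
proof -
  have two: "(2::'a) \<noteq> 0" using two_ne0[OF assms(1)] .
  have four: "(4::'a) \<noteq> 0" using two by (rule four_ne)
  define P where "P = (\<lambda>u v. v ^ 2 - (u ^ 2 - u * z - 4 * \<gamma>) * v + \<gamma> * z ^ 2 = (0::'a))"
  define B where "B = (\<lambda>v. {u. P u v})"
  define g where "g = (\<lambda>v::'a. v * (4 * v + z ^ 2) * (v + 4 * \<gamma>))"
  have bij: "bij_betw (\<lambda>(v, u). (u, v)) (SIGMA v:UNIV. B v) (Xset \<gamma> z)"
    by (rule bij_betw_byWitness[where f' = "\<lambda>(u, v). (v, u)"])
       (auto simp: B_def P_def Xset_def)
  have "card (Xset \<gamma> z) = card (SIGMA v:UNIV. B v)"
    using bij_betw_same_card[OF bij] by simp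
  also have "\<dots> = (\<Sum>v\<in>UNIV. card (B v))" by simp
  finally have c1: "int (card (Xset \<gamma> z)) = (\<Sum>v\<in>UNIV. int (card (B v)))" by simp
  have B0: "int (card (B 0)) = int (card (UNIV :: 'a set)) * (if z = 0 then 1 else 0)"
  proof (cases "z = 0")
    case True
    then have "B 0 = UNIV" by (auto simp: B_def P_def)
    then show ?thesis using True by simp
  next
    case False
    then have "B 0 = {}" using assms(2) by (auto simp: B_def P_def)
    then show ?thesis using False by simp
  qed
  have Bv: "int (card (B v)) = 1 + qchar (g v)" if v: "v \<noteq> 0" for v
  proof -
    define c where "c = 4 * \<gamma> + v + \<gamma> * z ^ 2 / v"
    have "P u v \<longleftrightarrow> u ^ 2 - z * u - c = 0" for u
    proof -
      have vc: "v * c = 4 * \<gamma> * v + v ^ 2 + \<gamma> * z ^ 2"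
        unfolding c_def using v by (simp add: distrib_left power2_eq_square)
      have "v * (u ^ 2 - z * u - c) = v * (u ^ 2 - z * u) - v * c"
        by (simp add: right_diff_distrib)
      also have "\<dots> = - (v ^ 2 - (u ^ 2 - u * z - 4 * \<gamma>) * v + \<gamma> * z ^ 2)"
        unfolding vc by (simp add: algebra_simps power2_eq_square)
      finally have e: "v * (u ^ 2 - z * u - c) = - (v ^ 2 - (u ^ 2 - u * z - 4 * \<gamma>) * v + \<gamma> * z ^ 2)" .
      have "P u v \<longleftrightarrow> v * (u ^ 2 - z * u - c) = 0"
        unfolding e P_def by (simp only: neg_equal_0_iff_equal)
      then show ?thesis using v by simp
    qed
    then have "B v = {u. u ^ 2 - z * u - c = 0}" by (simp add: B_def)
    then have "int (card (B v)) = 1 + qchar (z ^ 2 + 4 * c)" using card_quad[OF two] by simp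
    also have "qchar (z ^ 2 + 4 * c) = qchar (v ^ 2 * (z ^ 2 + 4 * c))"
      using qchar_sq[OF v] by simp
    also have "v ^ 2 * (z ^ 2 + 4 * c) = g v"
      unfolding c_def g_def using v by (simp add: field_simps power2_eq_square)
    finally show ?thesis .
  qed
  have card1: "card (UNIV :: 'a set) \<ge> 1" by (simp add: Suc_leI finite_UNIV_card_ge_0)
  have g0: "qchar (g 0) = 0" by (simp add: g_def qchar_def)
  have "(\<Sum>v\<in>UNIV. int (card (B v))) = int (card (B 0)) + (\<Sum>v\<in>UNIV - {0}. int (card (B v)))"
    by (simp add: sum.remove)
  also have "(\<Sum>v\<in>UNIV - {0}. int (card (B v))) = (\<Sum>v\<in>UNIV - {0}. 1 + qchar (g v))"
    by (rule sum.cong) (auto simp: Bv)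
  also have "\<dots> = int (card (UNIV :: 'a set)) - 1 + (\<Sum>v\<in>UNIV - {0}. qchar (g v))"
    using card1 by (simp add: sum.distrib card_Diff_singleton of_nat_diff)
  also have "(\<Sum>v\<in>UNIV - {0}. qchar (g v)) = (\<Sum>v\<in>UNIV. qchar (g v))"
    using g0 sum.remove[of UNIV 0 "\<lambda>v. qchar (g v)"] by simp
  also have "(\<Sum>v\<in>UNIV. qchar (g v)) = (\<Sum>x\<in>UNIV. qchar (x * (x + 16 * \<gamma>) * (x + z ^ 2)))"
  proof -
    have inj: "inj ((*) (4::'a))" using four by (auto intro: injI)
    then have surj: "range ((*) (4::'a)) = UNIV"
      using finite_UNIV_inj_surj[OF finite_UNIV inj] by simp
    have "(\<Sum>x\<in>UNIV. qchar (x * (x + 16 * \<gamma>) * (x + z ^ 2)))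
        = (\<Sum>x\<in>range ((*) 4). qchar (x * (x + 16 * \<gamma>) * (x + z ^ 2)))"
      using surj by simp
    also have "\<dots> = (\<Sum>v\<in>UNIV. qchar ((4 * v) * (4 * v + 16 * \<gamma>) * (4 * v + z ^ 2)))"
      using sum.reindex[OF inj] by simp
    also have "\<dots> = (\<Sum>v\<in>UNIV. qchar (g v))"
    proof (rule sum.cong)
      fix v :: 'a
      have "(4 * v) * (4 * v + 16 * \<gamma>) * (4 * v + z ^ 2) = 4 ^ 2 * g v"
        unfolding g_def by (simp add: algebra_simps power2_eq_square)
      then show "qchar ((4 * v) * (4 * v + 16 * \<gamma>) * (4 * v + z ^ 2)) = qchar (g v)"
        using qchar_sq[OF four] by simp
    qed simp
    finally show ?thesis by simp
  qed
  finally have fin: "(\<Sum>v\<in>UNIV. int (card (B v))) = int (card (B 0)) + (int (card (UNIV :: 'a set)) - 1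
      + (\<Sum>x\<in>UNIV. qchar (x * (x + 16 * \<gamma>) * (x + z ^ 2))))" .
  show ?thesis by (rule arith_aux[OF c1 fin B0])
qed

end
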